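(* Let $\mathbf{B}=\mathbf{B}_+\,\dot\cup\,\mathbf{B}'\in\dot{\mathbb{P}}(\mathbb{L}(\mathbf{C}))$ with $|\mathbf{B}|=|\mathbf{C}|$, and suppose every $L\in\mathbf{B}_+$ has a positive monotonic effect on $D$ relative to $\mathbf{C}$. If for some tree $\mathfrak{T}$ on $\mathbf{B}_+$ and some $\omega^*\in\Omega$ $$D_{\mathbf{B}=\mathbf{1}}(\omega^* )-\sum_{L\in\mathbf{B}_+}D_{\mathbf{B}\setminus\{L\}=\mathbf{1},L=0}(\omega^* )-\sum_{\varnothing\neq\widetilde{\mathbf{B}}\subseteq\mathbf{B}'}D_{\mathbf{B}\setminus\widetilde{\mathbf{B}}=\mathbf{1},\widetilde{\mathbf{B}}=\mathbf{0}}(\omega^* )+\sum_{\mathbf{E}\in\mathfrak{T}}D_{\mathbf{B}\setminus\mathbf{E}=\mathbf{1},\mathbf{E}=\mathbf{0}}(\omega^* )>0,$$ then $\mathbf{B}$ is singular for $\mathcal{D}(\mathbf{C},\Omega)$.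
   Context: Events are binary random variables on a population $\Omega$; $\overline{X}=1-X$; $\mathbb{L}(\mathbf{C})=\mathbf{C}\cup\{\overline{X}:X\in\mathbf{C}\}$; $\dot{\mathbb{P}}(\mathbb{L}(\mathbf{C}))$ is the set of subsets of $\mathbb{L}(\mathbf{C})$ not containing both $X$ and $\overline{X}$; $(L)_{\mathbf{c}}$ is the value of literal $L$ under assignment $\mathbf{c}$; $\bigwedge(\mathbf{B})=\min_{L\in\mathbf{B}}L$. Potential outcomes $D_{\mathbf{c}}(\omega)\in\{0,1\}$. Since $|\mathbf{B}|=|\mathbf{C}|$, values of the literals of $\mathbf{B}$ determine an assignment to $\mathbf{C}$; $D_{\mathbf{B}\setminus\widetilde{\mathbf{B}}=\mathbf{1},\widetilde{\mathbf{B}}=\mathbf{0}}$ sets the literals in $\widetilde{\mathbf{B}}$ to 0 and the rest of $\mathbf{B}$ to 1. A literal $L$ has a positive monotonic effect on $D$ relative to $\mathbf{C}$ if for all $\omega$ and all assignments $\mathbf{c},\mathbf{c}'$ differing only in the variable underlying $L$ with $(L)_{\mathbf{c}}=1,(L)_{\mathbf{c}'}=0$, $D_{\mathbf{c}}(\omega)\ge D_{\mathbf{c}'}(\omega)$. A tree on a finite set $\mathbf{S}$ is a set $\mathfrak{T}$ of 2-element subsets of $\mathbf{S}$ with $|\mathfrak{T}|=|\mathbf{S}|-1$ connecting all elements (empty if $|\mathbf{S}|\le1$). $\mathbf{B}$ is a sufficient cause for $D$ relative to $\mathbf{C}$ for $\omega^*$ if some $\mathbf{c}^*$ has $(\bigwedge(\mathbf{B}))_{\mathbf{c}^*}=1$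 and $D_{\mathbf{c}}(\omega^* )=1$ whenever $(\bigwedge(\mathbf{B}))_{\mathbf{c}}=1$; minimal if no proper subset is such; singular for $\omega^*$ if minimal and no other $\mathbf{B}'\in\dot{\mathbb{P}}(\mathbb{L}(\mathbf{C}))$ is a minimal sufficient cause for $\omega^*$; singular for $\mathcal{D}(\mathbf{C},\Omega)$ if singular for some $\omega^*\in\Omega$. *)

theory Defs
  imports Main
begin

text \<open>Variables (events) range over type 'v; a literal is a pair (X, b):
  (X, True) stands for the event X and (X, False) for its complement.\<close>

type_synonym 'v lit = "'v \<times> bool"

definition lits :: "'v set \<Rightarrow> 'v lit set" where
  "lits C = C \<times> UNIV"

definition consistent_lits :: "'v set \<Rightarrow> 'v lit set set" where
  "consistent_lits C = {B. B \<subseteq> lits C \<and> (\<forall>X. \<not> ((X, True) \<in> B \<and> (X, False) \<in> B))}"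

definition assignments :: "'v set \<Rightarrow> ('v \<Rightarrow> bool) set" where
  "assignments C = {c. \<forall>v. v \<notin> C \<longrightarrow> c v = False}"

definition lit_val :: "'v lit \<Rightarrow> ('v \<Rightarrow> bool) \<Rightarrow> bool" where
  "lit_val L c = (c (fst L) = snd L)"

definition conj_val :: "'v lit set \<Rightarrow> ('v \<Rightarrow> bool) \<Rightarrow> bool" where
  "conj_val B c = (\<forall>L\<in>B. lit_val L c)"

text \<open>Assignment setting literals of Bt to 0 and the other literals of B to 1.\<close>
definition set_lits :: "'v lit set \<Rightarrow> 'v lit set \<Rightarrow> ('v \<Rightarrow> bool)" where
  "set_lits B Bt = (\<lambda>v. \<exists>b. (v, b) \<in> B \<and> (b = ((v, b) \<notin> Bt)))"

definition pos_monotonic ::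
  "'v lit \<Rightarrow> (('v \<Rightarrow> bool) \<Rightarrow> 'w \<Rightarrow> bool) \<Rightarrow> 'v set \<Rightarrow> 'w set \<Rightarrow> bool" where
  "pos_monotonic L D C \<Omega> =
    (\<forall>w\<in>\<Omega>. \<forall>c\<in>assignments C. \<forall>c'\<in>assignments C.
       (\<forall>v. v \<noteq> fst L \<longrightarrow> c v = c' v) \<and> lit_val L c \<and> \<not> lit_val L c'
       \<longrightarrow> (D c' w \<longrightarrow> D c w))"

definition is_tree :: "'a set set \<Rightarrow> 'a set \<Rightarrow> bool" where
  "is_tree T S = (finite S \<and> (\<forall>E\<in>T. E \<subseteq> S \<and> card E = 2) \<and> card T = card S - 1 \<and>
     (\<forall>x\<in>S. \<forall>y\<in>S. (x, y) \<in> {(a, b). {a, b} \<in> T}\<^sup>*))"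

definition sufficient_cause ::
  "'v lit set \<Rightarrow> (('v \<Rightarrow> bool) \<Rightarrow> 'w \<Rightarrow> bool) \<Rightarrow> 'v set \<Rightarrow> 'w \<Rightarrow> bool" where
  "sufficient_cause B D C w =
    ((\<exists>c\<in>assignments C. conj_val B c) \<and>
     (\<forall>c\<in>assignments C. conj_val B c \<longrightarrow> D c w))"

definition minimal_sufficient_cause ::
  "'v lit set \<Rightarrow> (('v \<Rightarrow> bool) \<Rightarrow> 'w \<Rightarrow> bool) \<Rightarrow> 'v set \<Rightarrow> 'w \<Rightarrow> bool" where
  "minimal_sufficient_cause B D C w =
    (sufficient_cause B D C w \<and> (\<forall>B'. B' \<subset> B \<longrightarrow> \<not> sufficient_cause B' D C w))"

definition singular_for ::
  "'v lit set \<Rightarrow> (('v \<Rightarrow> bool) \<Rightarrow> 'w \<Rightarrow> bool) \<Rightarrow> 'v set \<Rightarrow> 'w \<Rightarrow> bool" where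
  "singular_for B D C w =
    (minimal_sufficient_cause B D C w \<and>
     (\<forall>B'\<in>consistent_lits C. B' \<noteq> B \<longrightarrow> \<not> minimal_sufficient_cause B' D C w))"

definition singular ::
  "'v lit set \<Rightarrow> (('v \<Rightarrow> bool) \<Rightarrow> 'w \<Rightarrow> bool) \<Rightarrow> 'v set \<Rightarrow> 'w set \<Rightarrow> bool" where
  "singular B D C \<Omega> = (\<exists>w\<in>\<Omega>. singular_for B D C w)"

end

theory Submission
  imports Defs
begin

definition grel :: "'a set set \<Rightarrow> ('a \<times> 'a) set" where
  "grel F = {(a,b). {a,b} \<in> F}"

definition reach :: "'a set set \<Rightarrow> 'a \<Rightarrow> 'a set" where
  "reach F x = {y. (x,y) \<in> (grel F)\<^sup>*}"

lemma grel_insert: "grel (insert {a,b} F) = grel F \<union> {(a,b),(b,a)}"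
  unfolding grel_def by (auto simp: doubleton_eq_iff)

lemma grel_sym: "(x,y) \<in> (grel F)\<^sup>* \<Longrightarrow> (y,x) \<in> (grel F)\<^sup>*"
proof -
  have "(grel F)\<inverse> = grel F" unfolding grel_def by (auto simp: insert_commute)
  moreover assume "(x,y) \<in> (grel F)\<^sup>*"
  ultimately show ?thesis by (metis converse_iff rtrancl_converseI)
qed

lemma reach_eq: "y \<in> reach F x \<Longrightarrow> reach F y = reach F x"
  unfolding reach_def by (auto intro: rtrancl_trans dest: grel_sym)

lemma reach_self: "x \<in> reach F x" unfolding reach_def by simp

lemma reach_disj: "reach F a \<inter> reach F b \<noteq> {} \<Longrightarrow> reach F a = reach F b"
  by (metis disjoint_iff reach_eq)

lemma reach_sub: "reach F x \<subseteq> insert x (\<Union>F)"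
proof
  fix y assume "y \<in> reach F x"
  then have "(x,y) \<in> (grel F)\<^sup>*" unfolding reach_def by simp
  then show "y \<in> insert x (\<Union>F)"
    by (induction rule: rtrancl_induct) (auto simp: grel_def)
qed

lemma reach_insert:
  "reach (insert {a,b} F) x =
    (if a \<in> reach F x \<or> b \<in> reach F x then reach F a \<union> reach F b else reach F x)"
  (is "?L = ?X")
proof
  show "?L \<subseteq> ?X"
  proof
    fix y assume "y \<in> ?L"
    then have "(x,y) \<in> (grel F \<union> {(a,b),(b,a)})\<^sup>*" unfolding reach_def grel_insert by simp
    then show "y \<in> ?X"
    proof (induction rule: rtrancl_induct)
      case base
      then show ?case using reach_self reach_eq by (metis Un_iff)
    next
      case (step y z)
      show ?case
      proof (cases "(y,z) \<in> grel F")
        case True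
        then have "z \<in> reach F y" unfolding reach_def by simp
        then show ?thesis using step.IH reach_eq by (smt (verit) Un_iff)
      next
        case False
        then have "(y,z) = (a,b) \<or> (y,z) = (b,a)" using step by auto
        then show ?thesis using step.IH reach_self reach_eq
          by (smt (verit) Pair_inject Un_iff)
      qed
    qed
  qed
next
  have mono: "reach F u \<subseteq> reach (insert {a,b} F) u" for u
    unfolding reach_def grel_insert by (auto intro: rtrancl_mono[THEN subsetD, rotated])
  have ab: "b \<in> reach (insert {a,b} F) a" "a \<in> reach (insert {a,b} F) b"
    unfolding reach_def grel_insert by auto
  show "?X \<subseteq> ?L"
  proof (cases "a \<in> reach F x \<or> b \<in> reach F x")
    case True
    have aL: "a \<in> ?L" and bL: "b \<in> ?L"
    proof -
      show "a \<in> ?L"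
      proof (cases "a \<in> reach F x")
        case True then show ?thesis using mono by blast
      next
        case False
        then have "b \<in> ?L" using \<open>a \<in> reach F x \<or> b \<in> reach F x\<close> mono by blast
        then show ?thesis using ab(2) reach_eq by metis
      qed
      then show "b \<in> ?L" using ab(1) reach_eq by metis
    qed
    have "reach F a \<subseteq> ?L" using mono[of a] reach_eq[OF aL] by blast
    moreover have "reach F b \<subseteq> ?L" using mono[of b] reach_eq[OF bL] by blast
    ultimately show ?thesis using True by (simp only: if_True Un_subset_iff)
  next
    case False
    then show ?thesis using mono[of x] by (simp only: if_False)
  qed
qed

lemma reach_card:
  assumes "finite F" "\<forall>e\<in>F. \<exists>a b. e = {a,b}"
  shows "finite (reach F x) \<and> card (reach F x) \<le> card {e\<in>F. e \<subseteq> reach F x} + 1"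
  using assms
proof (induction F arbitrary: x rule: finite_induct)
  case empty
  have "reach {} x = {x}" unfolding reach_def grel_def by auto
  then show ?case by simp
next
  case (insert e F)
  obtain a b where e: "e = {a,b}" using insert.prems by auto
  have finU: "finite (\<Union>F)" using insert by auto
  have fin: "finite (reach F u)" for u using reach_sub[of F u] finU finite_subset by blast
  have IH: "card (reach F u) \<le> card {e\<in>F. e \<subseteq> reach F u} + 1" for u
    using insert by auto
  have finE: "finite {e\<in>F. e \<subseteq> X}" for X using insert by auto
  have finE2: "finite {e'\<in>insert e F. e' \<subseteq> X}" for X using insert by auto
  show ?case
  proof (cases "a \<in> reach F x \<or> b \<in> reach F x")
    case False
    then have R: "reach (insert e F) x = reach F x" unfolding e using reach_insert[of a b F x] by simp
    have "{e'\<in>insert e F. e' \<subseteq> reach F x} = {e'\<in>F. e' \<subseteq> reach F x}"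
      using False e by auto
    then show ?thesis using R IH fin by simp
  next
    case True
    then have R: "reach (insert e F) x = reach F a \<union> reach F b" unfolding e using reach_insert[of a b F x] by simp
    show ?thesis
    proof (cases "reach F a = reach F b")
      case True
      have "card (reach F a) \<le> card {e\<in>F. e \<subseteq> reach F a} + 1" by (rule IH)
      also have "card {e\<in>F. e \<subseteq> reach F a} \<le> card {e'\<in>insert e F. e' \<subseteq> reach F a}"
        by (rule card_mono[OF finE2]) auto
      finally show ?thesis using R True fin by simp
    next
      case False
      then have dis: "reach F a \<inter> reach F b = {}" using reach_disj[of F a b] by blast
      let ?Ea = "{e\<in>F. e \<subseteq> reach F a}" and ?Eb = "{e\<in>F. e \<subseteq> reach F b}"
      have c1: "card (reach F a \<union> reach F b) = card (reach F a) + card (reach F b)"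
        by (rule card_Un_disjoint[OF fin fin dis])
      have dE: "?Ea \<inter> ?Eb = {}"
      proof (rule ccontr)
        assume "?Ea \<inter> ?Eb \<noteq> {}"
        then obtain e' where "e' \<in> F" "e' \<subseteq> reach F a" "e' \<subseteq> reach F b" by blast
        moreover obtain p q where "e' = {p,q}" using insert.prems \<open>e' \<in> F\<close> by auto
        ultimately show False using dis by blast
      qed
      have c2: "card (?Ea \<union> ?Eb) = card ?Ea + card ?Eb"
        by (rule card_Un_disjoint[OF finE finE dE])
      have "e \<notin> ?Ea \<union> ?Eb" using insert.hyps(2) by blast
      then have c3: "card (insert e (?Ea \<union> ?Eb)) = card (?Ea \<union> ?Eb) + 1"
        using finE[of "reach F a"] finE[of "reach F b"] by simp
      have c4: "card (insert e (?Ea \<union> ?Eb)) \<le> card {e'\<in>insert e F. e' \<subseteq> reach F a \<union> reach F b}"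
      proof (rule card_mono[OF finE2])
        have "e \<subseteq> reach F a \<union> reach F b" unfolding e using reach_self[of a F] reach_self[of b F] by blast
        then show "insert e (?Ea \<union> ?Eb) \<subseteq> {e'\<in>insert e F. e' \<subseteq> reach F a \<union> reach F b}"
          by blast
      qed
      have "card (reach F a \<union> reach F b) \<le> card {e'\<in>insert e F. e' \<subseteq> reach F a \<union> reach F b} + 1"
        using c1 c2 c3 c4 IH[of a] IH[of b] by linarith
      then show ?thesis unfolding R using fin by simp
    qed
  qed
qed


lemma tree_bound:
  assumes "is_tree T S" "Z \<subseteq> S" "Z \<noteq> {}"
  shows "card {E\<in>T. E \<subseteq> Z} \<le> card Z - 1"
proof -
  from assms(1) have finS: "finite S" and Tsub: "\<forall>E\<in>T. E \<subseteq> S \<and> card E = 2"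
    and cT: "card T = card S - 1"
    and conn: "\<forall>x\<in>S. \<forall>y\<in>S. (x, y) \<in> {(a, b). {a, b} \<in> T}\<^sup>*"
    unfolding is_tree_def by auto
  have finT: "finite T" using Tsub finS by (metis PowI finite_Pow_iff finite_subset subsetI)
  obtain z0 where z0: "z0 \<in> Z" using assms(3) by blast
  define g where "g x = (if x \<in> Z then z0 else x)" for x
  define To where "To = {E\<in>T. \<not> E \<subseteq> Z}"
  define Tz where "Tz = {E\<in>T. E \<subseteq> Z}"
  define F' where "F' = (\<lambda>E. g ` E) ` To"
  have edge2: "\<exists>p q. E = {p,q}" if "E \<in> T" for E
    using Tsub that card_2_iff by metis
  have F'edges: "\<forall>e\<in>F'. \<exists>a b. e = {a,b}"
  proof
    fix e assume "e \<in> F'"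
    then obtain E where E: "E \<in> T" "e = g ` E" unfolding F'_def To_def by auto
    then obtain p q where "E = {p,q}" using edge2 by blast
    then show "\<exists>a b. e = {a,b}" using E by auto
  qed
  have finF': "finite F'" unfolding F'_def To_def using finT by simp
  have gstep: "(g u, g v) \<in> (grel F')\<^sup>*" if "(u, v) \<in> {(a, b). {a, b} \<in> T}\<^sup>*" for u v
    using that
  proof (induction rule: rtrancl_induct)
    case base then show ?case by simp
  next
    case (step y z)
    then have yz: "{y,z} \<in> T" by simp
    show ?case
    proof (cases "{y,z} \<subseteq> Z")
      case True
      then have "g z = g y" unfolding g_def by simp
      then show ?thesis using step.IH by simp
    next
      case False
      then have "{y,z} \<in> To" unfolding To_def using yz by simp
      then have "g ` {y,z} \<in> F'" unfolding F'_def by blast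
      then have "{g y, g z} \<in> F'" by simp
      then have "(g y, g z) \<in> grel F'" unfolding grel_def by simp
      then show ?thesis using step.IH by (rule rtrancl_into_rtrancl[rotated])
    qed
  qed
  have gz0: "g z0 = z0" unfolding g_def by simp
  have sub: "g ` S \<subseteq> reach F' z0"
  proof
    fix y assume "y \<in> g ` S"
    then obtain x where x: "x \<in> S" "y = g x" by blast
    have "z0 \<in> S" using z0 assms(2) by blast
    then have "(z0, x) \<in> {(a, b). {a, b} \<in> T}\<^sup>*" using conn x by blast
    then have "(g z0, g x) \<in> (grel F')\<^sup>*" by (rule gstep)
    then show "y \<in> reach F' z0" unfolding reach_def using x gz0 by simp
  qed
  have gS: "g ` S = insert z0 (S - Z)" unfolding g_def using z0 assms(2) by auto
  have finZ: "finite Z" using finS assms(2) finite_subset by blast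
  have c1: "card (g ` S) = card (S - Z) + 1" unfolding gS using finS z0 by simp
  have c2: "card (S - Z) = card S - card Z" using card_Diff_subset[OF finZ assms(2)] .
  have rc: "finite (reach F' z0) \<and> card (reach F' z0) \<le> card {e\<in>F'. e \<subseteq> reach F' z0} + 1"
    using reach_card[OF finF' F'edges] .
  have c3: "card (g ` S) \<le> card (reach F' z0)" using rc sub card_mono by blast
  have c4: "card {e\<in>F'. e \<subseteq> reach F' z0} \<le> card F'" using finF' by (intro card_mono) auto
  have c5: "card F' \<le> card To" unfolding F'_def by (rule card_image_le) (simp add: To_def finT)
  have c6: "card To + card Tz = card T"
  proof -
    have "To \<union> Tz = T" "To \<inter> Tz = {}" unfolding To_def Tz_def by auto
    moreover have "finite To" "finite Tz" unfolding To_def Tz_def using finT by auto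
    ultimately show ?thesis using card_Un_disjoint by metis
  qed
  have cZS: "card Z \<le> card S" using card_mono[OF finS assms(2)] .
  have "card Z \<ge> 1" using finZ assms(3) by (simp add: Suc_le_eq card_gt_0_iff)
  then show ?thesis unfolding Tz_def[symmetric]
    using c1 c2 c3 c4 c5 c6 cT cZS rc by linarith
qed

lemma cons_uniq: "B \<in> consistent_lits C \<Longrightarrow> (v,b) \<in> B \<Longrightarrow> (v,b') \<in> B \<Longrightarrow> b' = b"
  unfolding consistent_lits_def by (cases b; cases b'; auto)

lemma sl_val: "B \<in> consistent_lits C \<Longrightarrow> (v,b) \<in> B \<Longrightarrow>
    set_lits B S v = (if (v,b) \<in> S then \<not> b else b)"
proof -
  assume a: "B \<in> consistent_lits C" "(v,b) \<in> B"
  have u: "\<And>b'. (v,b') \<in> B \<Longrightarrow> b' = b" using cons_uniq[OF a] .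
  have "set_lits B S v = (b = ((v,b) \<notin> S))"
  proof
    assume "set_lits B S v"
    then obtain b' where b': "(v,b') \<in> B" "b' = ((v,b') \<notin> S)" unfolding set_lits_def by blast
    have "b' = b" using u b'(1) .
    then show "b = ((v,b) \<notin> S)" using b'(2) by blast
  next
    assume "b = ((v,b) \<notin> S)"
    with a(2) show "set_lits B S v" unfolding set_lits_def by blast
  qed
  then show ?thesis by (cases b; cases "(v,b) \<in> S") simp_all
qed

lemma sl_assign: "B \<in> consistent_lits C \<Longrightarrow> set_lits B S \<in> assignments C"
  unfolding assignments_def set_lits_def consistent_lits_def lits_def by auto

lemma lit_sl: "B \<in> consistent_lits C \<Longrightarrow> L \<in> B \<Longrightarrow> lit_val L (set_lits B S) = (L \<notin> S)"
proof -
  assume a: "B \<in> consistent_lits C" "L \<in> B"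
  obtain v b where L: "L = (v,b)" by fastforce
  show ?thesis using sl_val[OF a(1), of v b S] a(2) unfolding L lit_val_def by (cases b) auto
qed

lemma mono1:
  assumes cons: "B \<in> consistent_lits C" and pm: "pos_monotonic L D C \<Omega>" and w: "w \<in> \<Omega>"
    and L: "L \<in> B" and f: "D (set_lits B S) w"
  shows "D (set_lits B (S - {L})) w"
proof (cases "L \<in> S")
  case False
  then show ?thesis using f by simp
next
  case True
  obtain v0 b0 where L0: "L = (v0,b0)" by fastforce
  have agree: "\<forall>v. v \<noteq> fst L \<longrightarrow> set_lits B (S - {L}) v = set_lits B S v"
    unfolding set_lits_def L0 by auto
  have l1: "lit_val L (set_lits B (S - {L}))" using lit_sl[OF cons L] by simp
  have l2: "\<not> lit_val L (set_lits B S)" using lit_sl[OF cons L] True by simp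
  have "\<forall>w\<in>\<Omega>. \<forall>c\<in>assignments C. \<forall>c'\<in>assignments C.
       (\<forall>v. v \<noteq> fst L \<longrightarrow> c v = c' v) \<and> lit_val L c \<and> \<not> lit_val L c'
       \<longrightarrow> (D c' w \<longrightarrow> D c w)" using pm unfolding pos_monotonic_def .
  then have "(\<forall>v. v \<noteq> fst L \<longrightarrow> set_lits B (S - {L}) v = set_lits B S v) \<and>
      lit_val L (set_lits B (S - {L})) \<and> \<not> lit_val L (set_lits B S)
       \<longrightarrow> (D (set_lits B S) w \<longrightarrow> D (set_lits B (S - {L})) w)"
    using w sl_assign[OF cons, of S] sl_assign[OF cons, of "S - {L}"] by blast
  then show ?thesis using agree l1 l2 f by blast
qed

lemma mono_iter:
  assumes "finite R" "B \<in> consistent_lits C" "w \<in> \<Omega>" "\<forall>L\<in>R. pos_monotonic L D C \<Omega>"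
    "R \<subseteq> B" "D (set_lits B S) w"
  shows "D (set_lits B (S - R)) w"
  using assms
proof (induction R rule: finite_induct)
  case empty then show ?case by simp
next
  case (insert x R)
  then have "D (set_lits B (S - R)) w" by simp
  then have "D (set_lits B (S - R - {x})) w"
    using mono1[OF insert.prems(1), of x D \<Omega> w] insert.prems by simp
  moreover have "S - R - {x} = S - insert x R" by blast
  ultimately show ?case by simp
qed

theorem mainTheorem15:
  fixes C :: "'v set" and \<Omega> :: "'w set" and D :: "('v \<Rightarrow> bool) \<Rightarrow> 'w \<Rightarrow> bool"
    and B Bp B' :: "'v lit set" and T :: "'v lit set set" and w :: 'w
  assumes "finite C"
    and "B \<in> consistent_lits C" and "card B = card C"
    and "B = Bp \<union> B'" and "Bp \<inter> B' = {}"
    and "\<forall>L\<in>Bp. pos_monotonic L D C \<Omega>"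
    and "is_tree T Bp" and "w \<in> \<Omega>"
    and "(of_bool (D (set_lits B {}) w) :: int)
         - (\<Sum>L\<in>Bp. of_bool (D (set_lits B {L}) w))
         - (\<Sum>Bt\<in>{Bt. Bt \<noteq> {} \<and> Bt \<subseteq> B'}. of_bool (D (set_lits B Bt) w))
         + (\<Sum>E\<in>T. of_bool (D (set_lits B E) w)) > 0"
  shows "singular B D C \<Omega>"
proof -
  define f where "f S = D (set_lits B S) w" for S
  note cons = assms(2)
  have Blits: "B \<subseteq> C \<times> UNIV" using cons unfolding consistent_lits_def lits_def by blast
  have finB: "finite B" using Blits assms(1) finite_subset by (metis finite_SigmaI finite_code)
  have finBp: "finite Bp" and finB': "finite B'" using finB assms(4) by auto
  have BpB: "Bp \<subseteq> B" using assms(4) by blast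
  have monoR: "f (S - R)" if "R \<subseteq> Bp" "f S" for S R
    unfolding f_def
    using mono_iter[OF finite_subset[OF that(1) finBp] cons assms(8)] that assms(6) BpB
    unfolding f_def by blast
  define Z where "Z = {L\<in>Bp. f {L}}"
  have s1: "(\<Sum>L\<in>Bp. of_bool (f {L}) :: int) = int (card Z)"
  proof -
    have "Bp \<inter> {L. f {L}} = Z" unfolding Z_def by auto
    then show ?thesis using finBp by simp
  qed
  have finT: "finite T" using assms(7) finBp unfolding is_tree_def
    by (metis PowI finite_Pow_iff finite_subset subsetI)
  have Tsub: "\<forall>E\<in>T. E \<subseteq> Bp \<and> card E = 2" using assms(7) unfolding is_tree_def by auto
  have s2: "(\<Sum>E\<in>T. of_bool (f E) :: int) \<le> int (card {E\<in>T. E \<subseteq> Z})"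
  proof -
    have "T \<inter> {E. f E} \<subseteq> {E\<in>T. E \<subseteq> Z}"
    proof
      fix E assume E: "E \<in> T \<inter> {E. f E}"
      then obtain p q where pq: "E = {p,q}" "p \<noteq> q" using Tsub card_2_iff by (metis IntD1)
      have pq': "p \<in> Bp" "q \<in> Bp" using Tsub E pq by auto
      have "f ({p,q} - {q})" using monoR[of "{q}" "{p,q}"] pq' E pq by auto
      moreover have "f ({p,q} - {p})" using monoR[of "{p}" "{p,q}"] pq' E pq by auto
      ultimately have "f {p}" "f {q}" using pq(2) by (auto simp: insert_Diff_if)
      then show "E \<in> {E\<in>T. E \<subseteq> Z}" using E pq pq' unfolding Z_def by auto
    qed
    then have "card (T \<inter> {E. f E}) \<le> card {E\<in>T. E \<subseteq> Z}" using finT by (intro card_mono) auto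
    then show ?thesis using finT by simp
  qed
  let ?S3 = "(\<Sum>Bt\<in>{Bt. Bt \<noteq> {} \<and> Bt \<subseteq> B'}. of_bool (f Bt) :: int)"
  have s3: "?S3 \<ge> 0" by (intro sum_nonneg) simp
  have ineq: "of_bool (f {}) - int (card Z) - ?S3 + (\<Sum>E\<in>T. of_bool (f E) :: int) > 0"
    using assms(9) s1 unfolding f_def by simp
  have Zempty: "Z = {}"
  proof (rule ccontr)
    assume Zne: "Z \<noteq> {}"
    have "card {E\<in>T. E \<subseteq> Z} \<le> card Z - 1"
      by (rule tree_bound[OF assms(7) _ Zne]) (auto simp: Z_def)
    moreover have "card Z \<ge> 1" using Zne finBp unfolding Z_def by (simp add: Suc_le_eq card_gt_0_iff)
    ultimately have "int (card {E\<in>T. E \<subseteq> Z}) \<le> int (card Z) - 1" by linarith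
    moreover have "of_bool (f {}) \<le> (1::int)" by simp
    ultimately show False using ineq s2 s3 by linarith
  qed
  have "{E\<in>T. E \<subseteq> Z} = {}"
  proof -
    have "E \<noteq> {}" if "E \<in> T" for E using Tsub that by fastforce
    then show ?thesis using Zempty by auto
  qed
  then have "(\<Sum>E\<in>T. of_bool (f E) :: int) \<le> 0" using s2 by (metis card.empty of_nat_0)
  then have "of_bool (f {}) - ?S3 > 0" using ineq Zempty by simp
  then have f0: "f {}" and S30: "?S3 = 0" using s3 by (cases "f {}"; simp)+
  have finP: "finite {Bt. Bt \<noteq> {} \<and> Bt \<subseteq> B'}" using finB' by (simp add: finite_subset)
  have fB': "\<not> f Bt" if "Bt \<noteq> {}" "Bt \<subseteq> B'" for Bt
  proof -
    have "\<forall>x\<in>{Bt. Bt \<noteq> {} \<and> Bt \<subseteq> B'}. (of_bool (f x) :: int) = 0"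
      using S30 sum_nonneg_eq_0_iff[OF finP, of "\<lambda>x. (of_bool (f x) :: int)"] by simp
    then show ?thesis using that by simp
  qed
  have fBp: "\<not> f {L}" if "L \<in> Bp" for L using Zempty that unfolding Z_def by blast
  have fM: "\<not> f M" if Mne: "M \<noteq> {}" and MB: "M \<subseteq> B" for M
  proof
    assume fm: "f M"
    show False
    proof (cases "M \<inter> B' = {}")
      case False
      have "f (M - (M \<inter> Bp))" using monoR[of "M \<inter> Bp" M] fm by blast
      moreover have "M - (M \<inter> Bp) = M \<inter> B'" using MB assms(4) assms(5) by blast
      ultimately show False using fB'[of "M \<inter> B'"] False by simp
    next
      case True
      obtain L where L: "L \<in> M" using Mne by blast
      have Lp: "L \<in> Bp" using L True MB assms(4) by blast
      have "M - {L} \<subseteq> Bp" using True MB assms(4) by blast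
      then have "f (M - (M - {L}))" using monoR fm by blast
      moreover have "M - (M - {L}) = {L}" using L by blast
      ultimately show False using fBp[OF Lp] by simp
    qed
  qed
  have cover: "\<exists>b. (v,b) \<in> B" if "v \<in> C" for v
  proof -
    have "fst ` B \<subseteq> C" using Blits by auto
    moreover have "inj_on fst B"
    proof (rule inj_onI)
      fix x y assume xy: "x \<in> B" "y \<in> B" "fst x = fst y"
      obtain v b where x: "x = (v,b)" by fastforce
      obtain b' where y: "y = (v,b')" using xy(3) x by (metis fst_conv prod.collapse)
      show "x = y" using cons_uniq[OF cons, of v b b'] xy x y by simp
    qed
    then have "card (fst ` B) = card C" using assms(3) card_image by metis
    ultimately have "fst ` B = C" using card_subset_eq[OF assms(1)] by blast
    then show ?thesis using that by force
  qed
  have uniqB: "B'' = B" if cons'': "B'' \<in> consistent_lits C" and suff: "sufficient_cause B'' D C w" for B''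
  proof -
    define M where "M = {(v,b). (v,b) \<in> B \<and> (v, \<not> b) \<in> B''}"
    have B''C: "v \<in> C" if "(v,b) \<in> B''" for v b
      using cons'' that unfolding consistent_lits_def lits_def by auto
    have "conj_val B'' (set_lits B M)"
      unfolding conj_val_def
    proof
      fix L assume L: "L \<in> B''"
      obtain v b'' where Lv: "L = (v,b'')" by fastforce
      obtain b where vb: "(v,b) \<in> B" using cover B''C L Lv by blast
      have sv: "set_lits B M v = (if (v,b) \<in> M then \<not> b else b)" using sl_val[OF cons vb] .
      show "lit_val L (set_lits B M)"
      proof (cases "b'' = b")
        case True
        have "(v, \<not> b) \<notin> B''" using cons_uniq[OF cons'' L[unfolded Lv]] True by fastforce
        then show ?thesis using sv True Lv unfolding lit_val_def M_def by simp
      next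
        case False
        then have "(v,b) \<in> M" using L Lv vb unfolding M_def by (cases b; cases b'') auto
        then show ?thesis using sv False Lv unfolding lit_val_def by (cases b; cases b'') auto
      qed
    qed
    then have "f M" using suff sl_assign[OF cons] unfolding sufficient_cause_def f_def by blast
    moreover have "M \<subseteq> B" unfolding M_def by auto
    ultimately have M0: "M = {}" using fM by blast
    have sub: "B'' \<subseteq> B"
    proof
      fix L assume L: "L \<in> B''"
      obtain v b'' where Lv: "L = (v,b'')" by fastforce
      obtain b where vb: "(v,b) \<in> B" using cover B''C L Lv by blast
      show "L \<in> B"
      proof (cases "b'' = b")
        case True then show ?thesis using vb Lv by simp
      next
        case False
        then have "(v,b) \<in> M" using L Lv vb unfolding M_def by (cases b; cases b'') auto
        then show ?thesis using M0 by simp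
      qed
    qed
    show "B'' = B"
    proof (rule ccontr)
      assume "B'' \<noteq> B"
      then obtain L where L: "L \<in> B" "L \<notin> B''" using sub by blast
      have "conj_val B'' (set_lits B {L})"
        unfolding conj_val_def using lit_sl[OF cons] sub L(2) by blast
      then have "f {L}" using suff sl_assign[OF cons] unfolding sufficient_cause_def f_def by blast
      then show False using fM[of "{L}"] L(1) by blast
    qed
  qed
  have suffB: "sufficient_cause B D C w"
    unfolding sufficient_cause_def
  proof
    have "conj_val B (set_lits B {})" unfolding conj_val_def using lit_sl[OF cons] by simp
    then show "\<exists>c\<in>assignments C. conj_val B c" using sl_assign[OF cons] by blast
  next
    show "\<forall>c\<in>assignments C. conj_val B c \<longrightarrow> D c w"
    proof (intro ballI impI)
      fix c assume c: "c \<in> assignments C" and cv: "conj_val B c"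
      have "c = set_lits B {}"
      proof
        fix v
        show "c v = set_lits B {} v"
        proof (cases "v \<in> C")
          case True
          then obtain b where vb: "(v,b) \<in> B" using cover by blast
          then have "c v = b" using cv unfolding conj_val_def lit_val_def by auto
          then show ?thesis using sl_val[OF cons vb] by simp
        next
          case False
          then show ?thesis using c sl_assign[OF cons, of "{}"] unfolding assignments_def by simp
        qed
      qed
      then show "D c w" using f0 unfolding f_def by simp
    qed
  qed
  have minB: "minimal_sufficient_cause B D C w"
    unfolding minimal_sufficient_cause_def
  proof (intro conjI allI impI notI)
    show "sufficient_cause B D C w" by (rule suffB)
  next
    fix B'' assume ps: "B'' \<subset> B" and s: "sufficient_cause B'' D C w"
    have "B'' \<in> consistent_lits C" using ps cons unfolding consistent_lits_def by blast
    then have "B'' = B" using uniqB s by blast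
    then show False using ps by simp
  qed
  have "singular_for B D C w"
    unfolding singular_for_def using minB uniqB unfolding minimal_sufficient_cause_def by blast
  then show ?thesis unfolding singular_def using assms(8) by blast
qed

end
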